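(* Let $S,T$ be sets of vectors in $\mathbb{R}^d$ with $|S|=|T|=r$, $|S\triangle T|\leq 2d$, and $V_SV_S^\top$ invertible, and let $X=T\setminus S$, $Y=S\setminus T$. Then \[\det(V_TV_T^\top)\geq\det(V_SV_S^\top)\cdot\det\big(V_X^\top(V_SV_S^\top)^{-1}V_Y\big)^2.\]
   Context: For a set $Z$ of vectors in $\mathbb{R}^d$, $V_Z$ denotes the $d\times|Z|$ matrix whose columns are the vectors of $Z$. *)

theory Defs
  imports "Jordan_Normal_Form.Determinant"
begin

definition enum_set :: "'a set \<Rightarrow> 'a list" where
  "enum_set A = (SOME xs. distinct xs \<and> set xs = A)"

definition vmat :: "nat \<Rightarrow> real vec set \<Rightarrow> real mat" where
  "vmat d Z = mat_of_cols d (enum_set Z)"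

text \<open>Inverse of a square matrix (meaningful when it is invertible).\<close>
definition mat_inv :: "real mat \<Rightarrow> real mat" where
  "mat_inv A = (SOME B. B \<in> carrier_mat (dim_row A) (dim_row A) \<and>
                        A * B = 1\<^sub>m (dim_row A) \<and> B * A = 1\<^sub>m (dim_row A))"

end

theory Submission
  imports Defs
begin

definition psd :: "nat \<Rightarrow> real mat \<Rightarrow> bool" where
  "psd n M \<longleftrightarrow> M \<in> carrier_mat n n \<and> M\<^sup>T = M \<and> (\<forall>x \<in> carrier_vec n. 0 \<le> x \<bullet> (M *\<^sub>v x))"

lemma qf_sum:
  assumes M: "M \<in> carrier_mat n n" and x: "x \<in> carrier_vec n"
  shows "x \<bullet> (M *\<^sub>v x) = (\<Sum>i<n. \<Sum>j<n. x$i * M$$(i,j) * x$j)"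
  using M x unfolding scalar_prod_def mult_mat_vec_def row_def
  by (auto simp: sum_distrib_left mult.assoc atLeast0LessThan intro!: sum.cong)

lemma self_scalar_nonneg: "0 \<le> (v::real vec) \<bullet> v"
  unfolding scalar_prod_def by (auto intro!: sum_nonneg)

lemma scalar_transpose_move:
  fixes P :: "real mat"
  assumes P: "P \<in> carrier_mat m n" and x: "x \<in> carrier_vec m" and w: "w \<in> carrier_vec n"
  shows "x \<bullet> (P *\<^sub>v w) = (P\<^sup>T *\<^sub>v x) \<bullet> w"
  using transpose_vec_mult_scalar[OF P w x] by simp

lemma psd_congr:
  assumes M: "psd n M" and P: "P \<in> carrier_mat m n"
  shows "psd m (P * M * P\<^sup>T)"
proof -
  have Mc: "M \<in> carrier_mat n n" and Mt: "M\<^sup>T = M" and Mq: "\<And>x. x \<in> carrier_vec n \<Longrightarrow> 0 \<le> x \<bullet> (M *\<^sub>v x)"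
    using M unfolding psd_def by auto
  have PT: "P\<^sup>T \<in> carrier_mat n m" using P by simp
  have c: "P * M * P\<^sup>T \<in> carrier_mat m m" using P Mc by auto
  have t: "(P * M * P\<^sup>T)\<^sup>T = P * M * P\<^sup>T"
    using P Mc Mt by (simp add: transpose_mult[of _ m n _ m] transpose_mult[of _ n n _ m] assoc_mult_mat[of _ m n _ n _ m])
  have q: "0 \<le> x \<bullet> ((P * M * P\<^sup>T) *\<^sub>v x)" if x: "x \<in> carrier_vec m" for x
  proof -
    have "(P * M * P\<^sup>T) *\<^sub>v x = P *\<^sub>v (M *\<^sub>v (P\<^sup>T *\<^sub>v x))"
      using P Mc x by (simp add: assoc_mult_mat_vec[of _ m n _ n x] assoc_mult_mat_vec[of _ m n _ m x])
    also have "x \<bullet> \<dots> = (P\<^sup>T *\<^sub>v x) \<bullet> (M *\<^sub>v (P\<^sup>T *\<^sub>v x))"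
      by (rule scalar_transpose_move[OF P x], insert Mc P x, auto)
    finally show ?thesis using Mq[of "P\<^sup>T *\<^sub>v x"] P x by auto
  qed
  show ?thesis unfolding psd_def using c t q by auto
qed

lemma psd_one: "psd n (1\<^sub>m n)"
  unfolding psd_def by (auto simp: self_scalar_nonneg)

lemma psd_gram: assumes V: "V \<in> carrier_mat n m" shows "psd n (V * V\<^sup>T)"
  using psd_congr[OF psd_one V] V by simp

lemma psd_add: assumes "psd n M" "psd n N" shows "psd n (M + N)"
  using assms unfolding psd_def
  by (auto simp: transpose_add add_mult_distrib_mat_vec[of _ n n] scalar_prod_add_distrib[of _ n])

lemma mat_delete_00_index:
  assumes "M \<in> carrier_mat (Suc m) (Suc m)" "i < m" "j < m"
  shows "mat_delete M 0 0 $$ (i,j) = M $$ (Suc i, Suc j)"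
  using assms unfolding mat_delete_def by auto

lemma psd_delete: assumes M: "psd (Suc m) M" shows "psd m (mat_delete M 0 0)"
proof -
  have Mc: "M \<in> carrier_mat (Suc m) (Suc m)" and Mt: "M\<^sup>T = M" and Mq: "\<And>x. x \<in> carrier_vec (Suc m) \<Longrightarrow> 0 \<le> x \<bullet> (M *\<^sub>v x)"
    using M unfolding psd_def by auto
  have c: "mat_delete M 0 0 \<in> carrier_mat m m" using mat_delete_carrier[OF Mc] by simp
  have sym: "M $$ (i,j) = M $$ (j,i)" if "i < Suc m" "j < Suc m" for i j
    using Mt Mc that by (metis carrier_matD index_transpose_mat(1))
  have t: "(mat_delete M 0 0)\<^sup>T = mat_delete M 0 0"
    by (rule eq_matI, insert c Mc sym, auto simp: mat_delete_00_index)
  have q: "0 \<le> y \<bullet> (mat_delete M 0 0 *\<^sub>v y)" if y: "y \<in> carrier_vec m" for y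
  proof -
    let ?x = "vCons 0 y"
    have xc: "?x \<in> carrier_vec (Suc m)" using y unfolding vCons_def by auto
    have "?x \<bullet> (M *\<^sub>v ?x) = (\<Sum>i<Suc m. \<Sum>j<Suc m. ?x$i * M$$(i,j) * ?x$j)"
      by (rule qf_sum[OF Mc xc])
    also have "\<dots> = (\<Sum>i<m. \<Sum>j<m. y$i * M$$(Suc i,Suc j) * y$j)"
      unfolding sum.lessThan_Suc_shift using y by (simp add: vCons_def)
    also have "\<dots> = y \<bullet> (mat_delete M 0 0 *\<^sub>v y)"
      by (subst qf_sum[OF c y], rule sum.cong, simp, rule sum.cong, auto simp: mat_delete_00_index[OF Mc])
    finally show ?thesis using Mq[OF xc] by simp
  qed
  show ?thesis unfolding psd_def using c t q by auto
qed

lemma sum2e: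
  fixes n j :: nat
  assumes "0 < n" "j < n" "j \<noteq> 0"
  shows "(\<Sum>k<n. ((if k = 0 then t else 0) + (if k = j then 1 else 0)) * f k) = t * f 0 + (f j::real)"
proof -
  have "(\<Sum>k<n. ((if k = 0 then t else 0) + (if k = j then 1 else 0)) * f k)
     = (\<Sum>k<n. (if k = 0 then t * f k else 0)) + (\<Sum>k<n. (if k = j then f k else 0))"
    unfolding sum.distrib[symmetric] using assms by (intro sum.cong, auto)
  also have "(\<Sum>k<n. (if k = 0 then t * f k else 0)) = t * f 0" using assms by (subst sum.delta, auto)
  also have "(\<Sum>k<n. (if k = j then f k else 0)) = f j" using assms by (subst sum.delta, auto)
  finally show ?thesis .
qed

lemma psd_row0_zero:
  assumes M: "psd n M" and z: "M $$ (0,0) = 0" and j: "j < n"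
  shows "M $$ (0,j) = 0"
proof (cases "j = 0")
  case True thus ?thesis using z by simp
next
  case False
  have Mc: "M \<in> carrier_mat n n" and Mt: "M\<^sup>T = M" and Mq: "\<And>x. x \<in> carrier_vec n \<Longrightarrow> 0 \<le> x \<bullet> (M *\<^sub>v x)"
    using M unfolding psd_def by auto
  have sym: "M $$ (i,k) = M $$ (k,i)" if "i < n" "k < n" for i k
    using Mt Mc that by (metis carrier_matD index_transpose_mat(1))
  have n0: "0 < n" using j by simp
  have key: "0 \<le> 2 * t * M $$ (0,j) + M $$ (j,j)" for t
  proof -
    define x where "x = vec n (\<lambda>i. (if i = 0 then t else 0) + (if i = j then 1 else 0))"
    have xc: "x \<in> carrier_vec n" unfolding x_def by simp
    have gen: "(\<Sum>i<n. x$i * g i) = t * g 0 + g j" for g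
    proof -
      have "(\<Sum>i<n. x$i * g i) = (\<Sum>i<n. ((if i = 0 then t else 0) + (if i = j then 1 else 0)) * g i)"
        unfolding x_def by (rule sum.cong, auto)
      also have "\<dots> = t * g 0 + g j" by (rule sum2e[OF n0 j False])
      finally show ?thesis .
    qed
    have "x \<bullet> (M *\<^sub>v x) = (\<Sum>i<n. \<Sum>k<n. x$i * M$$(i,k) * x$k)" by (rule qf_sum[OF Mc xc])
    also have "\<dots> = (\<Sum>i<n. x$i * (\<Sum>k<n. M$$(i,k) * x$k))"
      by (simp add: sum_distrib_left mult.assoc)
    also have "\<dots> = t * (\<Sum>k<n. M$$(0,k) * x$k) + (\<Sum>k<n. M$$(j,k) * x$k)"
      by (rule gen)
    also have "\<dots> = t * (t * M$$(0,0) + M$$(0,j)) + (t * M$$(j,0) + M$$(j,j))"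
      using gen[of "\<lambda>k. M$$(0,k)"] gen[of "\<lambda>k. M$$(j,k)"] by (simp add: mult.commute)
    also have "\<dots> = 2 * t * M $$ (0,j) + M $$ (j,j)" using z sym[OF n0 j] by simp
    finally show ?thesis using Mq[OF xc] by simp
  qed
  show ?thesis
  proof (rule ccontr)
    assume ne: "M $$ (0,j) \<noteq> 0"
    have "0 \<le> 2 * (- (M $$ (j,j) + 1) / (2 * M $$ (0,j))) * M $$ (0,j) + M $$ (j,j)" by (rule key)
    also have "\<dots> = -1" using ne by (simp add: field_simps)
    finally show False by simp
  qed
qed

lemma mult_entry:
  assumes "A \<in> carrier_mat n m" "B \<in> carrier_mat m p" "i < n" "j < p"
  shows "(A * B) $$ (i,j) = (\<Sum>k<m. A$$(i,k) * B$$(k,j))"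
proof -
  have "(A * B) $$ (i,j) = row A i \<bullet> col B j" using assms by simp
  also have "\<dots> = (\<Sum>k<m. A$$(i,k) * B$$(k,j))"
    using assms unfolding scalar_prod_def by (auto simp: atLeast0LessThan intro!: sum.cong)
  finally show ?thesis .
qed

lemma det_row0_single:
  fixes A :: "real mat"
  assumes A: "A \<in> carrier_mat (Suc m) (Suc m)" and z: "\<And>j. 0 < j \<Longrightarrow> j < Suc m \<Longrightarrow> A$$(0,j) = 0"
  shows "det A = A$$(0,0) * det (mat_delete A 0 0)"
proof -
  have "det A = (\<Sum>j<Suc m. A $$ (0,j) * cofactor A 0 j)" by (rule laplace_expansion_row[OF A], simp)
  also have "\<dots> = A$$(0,0) * cofactor A 0 0" unfolding sum.lessThan_Suc_shift using z by simp
  finally show ?thesis unfolding cofactor_def by simp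
qed

lemma det_empty: "M \<in> carrier_mat 0 0 \<Longrightarrow> det M = (1::real)"
proof -
  assume "M \<in> carrier_mat 0 0"
  hence "M = 1\<^sub>m 0" by (intro eq_matI, auto)
  thus ?thesis by simp
qed

definition Lmat :: "nat \<Rightarrow> real mat \<Rightarrow> real mat" where
  "Lmat n N = mat n n (\<lambda>(i,j). if i = j then 1 else if j = 0 then - N$$(i,0)/N$$(0,0) else 0)"

lemma Lmat_carrier[simp]: "Lmat n N \<in> carrier_mat n n" unfolding Lmat_def by simp

lemma det_Lmat: "det (Lmat n N) = 1"
proof -
  have "det (Lmat n N) = prod_list (diag_mat (Lmat n N))"
    by (rule det_lower_triangular[of n], auto simp: Lmat_def)
  also have "\<dots> = 1" unfolding prod_list_diag_prod by (auto simp: Lmat_def intro!: prod.neutral)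
  finally show ?thesis .
qed

lemma Lmat_row_sum:
  assumes i: "i < n" and n: "0 < n"
  shows "(\<Sum>l<n. Lmat n N $$ (i,l) * g l) = g i + (if i = 0 then 0 else - N$$(i,0)/N$$(0,0) * g 0)"
proof -
  have "(\<Sum>l<n. Lmat n N $$ (i,l) * g l) = (\<Sum>l<n. (if l = i then g l else 0) + (if i \<noteq> 0 \<and> l = 0 then - N$$(i,0)/N$$(0,0) * g l else 0))"
    using i by (intro sum.cong, auto simp: Lmat_def)
  also have "\<dots> = (\<Sum>l<n. (if l = i then g l else 0)) + (\<Sum>l<n. (if l = 0 then (if i \<noteq> 0 then - N$$(i,0)/N$$(0,0) * g l else 0) else 0))"
    unfolding sum.distrib[symmetric] by (intro sum.cong, auto)
  also have "(\<Sum>l<n. (if l = i then g l else 0)) = g i" using i by (subst sum.delta, auto)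
  also have "(\<Sum>l<n. (if l = 0 then (if i \<noteq> 0 then - N$$(i,0)/N$$(0,0) * g l else 0) else 0)) = (if i = 0 then 0 else - N$$(i,0)/N$$(0,0) * g 0)"
    using n by (subst sum.delta, auto)
  finally show ?thesis .
qed

lemma Lmat_col0:
  assumes N: "N \<in> carrier_mat (Suc m) (Suc m)" and c: "N$$(0,0) \<noteq> 0" and i: "i < Suc m"
  shows "(Lmat (Suc m) N * N * (Lmat (Suc m) N)\<^sup>T) $$ (i,0) = (if i = 0 then N$$(0,0) else 0)"
proof -
  let ?L = "Lmat (Suc m) N"
  have LN: "?L * N \<in> carrier_mat (Suc m) (Suc m)" using N by (metis Lmat_carrier mult_carrier_mat)
  have "(?L * N * ?L\<^sup>T) $$ (i,0) = (\<Sum>k<Suc m. (?L * N)$$(i,k) * ?L\<^sup>T$$(k,0))"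
    by (rule mult_entry[OF LN _ i, where p = "Suc m"], auto)
  also have "\<dots> = (\<Sum>k<Suc m. (?L * N)$$(i,k) * (if k = 0 then 1 else 0))"
    by (intro sum.cong, auto simp: Lmat_def)
  also have "\<dots> = (?L * N)$$(i,0)" by (simp add: if_distrib cong: if_cong)
  also have "\<dots> = (\<Sum>l<Suc m. ?L$$(i,l) * N$$(l,0))" by (rule mult_entry[OF _ N i], auto)
  also have "\<dots> = N$$(i,0) + (if i = 0 then 0 else - N$$(i,0)/N$$(0,0) * N$$(0,0))"
    by (rule Lmat_row_sum[OF i], simp)
  also have "\<dots> = (if i = 0 then N$$(0,0) else 0)" using c by auto
  finally show ?thesis .
qed

lemma psd_sym_entry: "psd n M \<Longrightarrow> i < n \<Longrightarrow> j < n \<Longrightarrow> M$$(i,j) = M$$(j,i)"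
  unfolding psd_def by (metis carrier_matD index_transpose_mat(1))

lemma psd_diag_nonneg: assumes M: "psd n M" and i: "i < n" shows "0 \<le> M$$(i,i)"
proof -
  have Mc: "M \<in> carrier_mat n n" using M unfolding psd_def by auto
  have "0 \<le> unit_vec n i \<bullet> (M *\<^sub>v unit_vec n i)" using M unfolding psd_def by auto
  also have "\<dots> = M$$(i,i)" using Mc i by simp
  finally show ?thesis .
qed

lemma Lmat_props:
  assumes N: "psd (Suc m) N" and c: "N$$(0,0) \<noteq> 0"
  defines "D \<equiv> Lmat (Suc m) N * N * (Lmat (Suc m) N)\<^sup>T"
  shows "psd (Suc m) D" "det D = det N" "D$$(0,0) = N$$(0,0)"
    "\<And>j. 0 < j \<Longrightarrow> j < Suc m \<Longrightarrow> D$$(0,j) = 0"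
proof -
  let ?L = "Lmat (Suc m) N"
  have Nc: "N \<in> carrier_mat (Suc m) (Suc m)" using N unfolding psd_def by auto
  show pD: "psd (Suc m) D" unfolding D_def by (rule psd_congr[OF N], simp)
  have "det D = det (?L * N) * det (?L\<^sup>T)" unfolding D_def
    by (rule det_mult[of _ "Suc m"], insert Nc, auto, metis Lmat_carrier mult_carrier_mat)
  also have "\<dots> = det N" using Nc det_mult[of ?L "Suc m" N] det_transpose[of ?L "Suc m"] by (simp add: det_Lmat)
  finally show "det D = det N" .
  show "D$$(0,0) = N$$(0,0)" unfolding D_def using Lmat_col0[OF Nc c] by simp
  fix j assume j: "0 < j" "j < Suc m"
  have "D$$(0,j) = D$$(j,0)" using psd_sym_entry[OF pD _ j(2)] by simp
  also have "\<dots> = 0" unfolding D_def using Lmat_col0[OF Nc c j(2)] j by simp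
  finally show "D$$(0,j) = 0" .
qed

lemma psd_det_nonneg: "psd n M \<Longrightarrow> 0 \<le> det M"
proof (induction n arbitrary: M)
  case 0
  then show ?case using det_empty[of M] unfolding psd_def by simp
next
  case (Suc m)
  have Mc: "M \<in> carrier_mat (Suc m) (Suc m)" using Suc.prems unfolding psd_def by auto
  show ?case
  proof (cases "M$$(0,0) = 0")
    case True
    have "det M = M$$(0,0) * det (mat_delete M 0 0)"
      by (rule det_row0_single[OF Mc], rule psd_row0_zero[OF Suc.prems True], simp)
    thus ?thesis using True by simp
  next
    case False
    define D where "D = Lmat (Suc m) M * M * (Lmat (Suc m) M)\<^sup>T"
    note P = Lmat_props[OF Suc.prems False, folded D_def]
    have Dc: "D \<in> carrier_mat (Suc m) (Suc m)" using P(1) unfolding psd_def by auto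
    have "det M = det D" using P(2) by simp
    also have "\<dots> = D$$(0,0) * det (mat_delete D 0 0)" by (rule det_row0_single[OF Dc P(4)])
    finally have e: "det M = D$$(0,0) * det (mat_delete D 0 0)" .
    have "0 \<le> D$$(0,0)" by (rule psd_diag_nonneg[OF P(1)], simp)
    moreover have "0 \<le> det (mat_delete D 0 0)" by (rule Suc.IH, rule psd_delete[OF P(1)])
    ultimately show ?thesis using e by simp
  qed
qed

definition ext0 :: "nat \<Rightarrow> real mat \<Rightarrow> real mat" where
  "ext0 m D = mat (Suc m) (Suc m) (\<lambda>(i,j). if i = 0 \<or> j = 0 then 0 else D$$(i-1,j-1))"

lemma psd_ext0: assumes D: "psd m D" shows "psd (Suc m) (ext0 m D)"
proof -
  have Dc: "D \<in> carrier_mat m m" and Dq: "\<And>x. x \<in> carrier_vec m \<Longrightarrow> 0 \<le> x \<bullet> (D *\<^sub>v x)"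
    using D unfolding psd_def by auto
  have c: "ext0 m D \<in> carrier_mat (Suc m) (Suc m)" unfolding ext0_def by simp
  have t: "(ext0 m D)\<^sup>T = ext0 m D"
    by (rule eq_matI, auto simp: ext0_def, rule psd_sym_entry[OF D], auto)
  have q: "0 \<le> x \<bullet> (ext0 m D *\<^sub>v x)" if x: "x \<in> carrier_vec (Suc m)" for x
  proof -
    define y where "y = vec m (\<lambda>i. x $ Suc i)"
    have yc: "y \<in> carrier_vec m" unfolding y_def by simp
    have "x \<bullet> (ext0 m D *\<^sub>v x) = (\<Sum>i<Suc m. \<Sum>j<Suc m. x$i * ext0 m D$$(i,j) * x$j)"
      by (rule qf_sum[OF c x])
    also have "\<dots> = (\<Sum>i<m. \<Sum>j<m. y$i * D$$(i,j) * y$j)"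
      unfolding sum.lessThan_Suc_shift by (simp add: ext0_def y_def)
    also have "\<dots> = y \<bullet> (D *\<^sub>v y)" by (rule qf_sum[OF Dc yc, symmetric])
    finally show ?thesis using Dq[OF yc] by simp
  qed
  show ?thesis unfolding psd_def using c t q by auto
qed

lemma det_congr_Lmat:
  assumes X: "X \<in> carrier_mat n n"
  shows "det (Lmat n N * X * (Lmat n N)\<^sup>T) = det X"
proof -
  have LX: "Lmat n N * X \<in> carrier_mat n n" using X by (metis Lmat_carrier mult_carrier_mat)
  have "det (Lmat n N * X * (Lmat n N)\<^sup>T) = det (Lmat n N * X) * det ((Lmat n N)\<^sup>T)"
    by (rule det_mult[OF LX], simp)
  also have "\<dots> = det X" using X det_mult[of "Lmat n N" n X] det_transpose[of "Lmat n N" n] by (simp add: det_Lmat)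
  finally show ?thesis .
qed




lemma psd_det_mono: "psd n M \<Longrightarrow> psd n N \<Longrightarrow> det N \<le> det (M + N)"
proof (induction n arbitrary: M N)
  case 0
  then show ?case using det_empty[of N] det_empty[of "M + N"] unfolding psd_def by simp
next
  case (Suc m)
  have Mc: "M \<in> carrier_mat (Suc m) (Suc m)" using Suc.prems unfolding psd_def by auto
  have Nc: "N \<in> carrier_mat (Suc m) (Suc m)" using Suc.prems unfolding psd_def by auto
  show ?case
  proof (cases "N$$(0,0) = 0")
    case True
    have "det N = N$$(0,0) * det (mat_delete N 0 0)"
      by (rule det_row0_single[OF Nc], rule psd_row0_zero[OF Suc.prems(2) True], simp)
    hence "det N = 0" using True by simp
    moreover have "0 \<le> det (M + N)" by (rule psd_det_nonneg, rule psd_add[OF Suc.prems])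
    ultimately show ?thesis by simp
  next
    case False
    let ?L = "Lmat (Suc m) N"
    define D where "D = ?L * N * ?L\<^sup>T"
    define Mt where "Mt = ?L * M * ?L\<^sup>T"
    note P = Lmat_props[OF Suc.prems(2) False, folded D_def]
    have pMt: "psd (Suc m) Mt" unfolding Mt_def by (rule psd_congr[OF Suc.prems(1)], simp)
    have Dc: "D \<in> carrier_mat (Suc m) (Suc m)" using P(1) unfolding psd_def by auto
    have Mtc: "Mt \<in> carrier_mat (Suc m) (Suc m)" using pMt unfolding psd_def by auto
    have Di0: "D$$(i,0) = 0" if "0 < i" "i < Suc m" for i
      using Lmat_col0[OF Nc False that(2)] that unfolding D_def by simp
    define X where "X = Mt + D"
    have Xc: "X \<in> carrier_mat (Suc m) (Suc m)" unfolding X_def using Mtc Dc by simp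
    have "?L * (M + N) * ?L\<^sup>T = X"
    proof -
      have LM: "?L * M \<in> carrier_mat (Suc m) (Suc m)" using Mc by (metis Lmat_carrier mult_carrier_mat)
      have LN: "?L * N \<in> carrier_mat (Suc m) (Suc m)" using Nc by (metis Lmat_carrier mult_carrier_mat)
      have "?L * (M + N) = ?L * M + ?L * N" by (rule mult_add_distrib_mat[OF Lmat_carrier Mc Nc])
      moreover have "(?L * M + ?L * N) * ?L\<^sup>T = ?L * M * ?L\<^sup>T + ?L * N * ?L\<^sup>T"
        by (rule add_mult_distrib_mat[OF LM LN, of _ "Suc m"], simp)
      ultimately show ?thesis unfolding X_def Mt_def D_def by simp
    qed
    hence detMN: "det (M + N) = det X" using det_congr_Lmat[of "M + N" "Suc m" N] Mc Nc by simp
    define D' where "D' = mat_delete D 0 0"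
    have pD': "psd m D'" unfolding D'_def by (rule psd_delete[OF P(1)])
    define X0 where "X0 = Mt + ext0 m D'"
    have pX0: "psd (Suc m) X0" unfolding X0_def by (rule psd_add[OF pMt psd_ext0[OF pD']])
    have X0c: "X0 \<in> carrier_mat (Suc m) (Suc m)" using pX0 unfolding psd_def by auto
    have X0e: "X0$$(i,j) = X$$(i,j) - (if i = 0 \<and> j = 0 then N$$(0,0) else 0)"
      if "i < Suc m" "j < Suc m" for i j
    proof -
      have "D$$(i,j) = ext0 m D'$$(i,j) + (if i = 0 \<and> j = 0 then N$$(0,0) else 0)"
        using that P(3) P(4) Di0 Dc unfolding ext0_def D'_def
        by (cases "i = 0"; cases "j = 0"; auto simp: mat_delete_def)
      thus ?thesis unfolding X0_def X_def using that Mtc Dc by (simp add: ext0_def)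
    qed
    have del: "mat_delete X0 0 j = mat_delete X 0 j" if "j < Suc m" for j
      by (rule eq_matI, insert X0c Xc X0e, auto simp: mat_delete_def)
    have "det X = (\<Sum>j<Suc m. X $$ (0,j) * cofactor X 0 j)" by (rule laplace_expansion_row[OF Xc], simp)
    also have "\<dots> = (\<Sum>j<Suc m. X0 $$ (0,j) * cofactor X0 0 j + (if j = 0 then N$$(0,0) * cofactor X 0 0 else 0))"
      by (rule sum.cong, simp, auto simp: X0e cofactor_def del left_diff_distrib)
    also have "\<dots> = det X0 + N$$(0,0) * cofactor X 0 0"
    proof -
      have a: "(\<Sum>j<Suc m. X0 $$ (0,j) * cofactor X0 0 j) = det X0"
        using laplace_expansion_row[OF X0c, of 0] by simp
      have b: "(\<Sum>j<Suc m. (if j = 0 then N$$(0,0) * cofactor X 0 0 else 0)) = N$$(0,0) * cofactor X 0 0"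
        by (subst sum.delta, auto)
      show ?thesis unfolding sum.distrib a b ..
    qed
    finally have e1: "det X = det X0 + N$$(0,0) * det (mat_delete X 0 0)" unfolding cofactor_def by simp
    have "mat_delete X 0 0 = mat_delete Mt 0 0 + D'"
      unfolding X_def D'_def by (rule eq_matI, insert Mtc Dc, auto simp: mat_delete_def)
    hence ih: "det D' \<le> det (mat_delete X 0 0)"
      using Suc.IH[OF psd_delete[OF pMt] pD'] by simp
    have dN: "det N = N$$(0,0) * det D'"
      using det_row0_single[OF Dc P(4)] P(2) P(3) unfolding D'_def by simp
    have c0: "0 \<le> N$$(0,0)" by (rule psd_diag_nonneg[OF Suc.prems(2)], simp)
    have "0 \<le> det X0" by (rule psd_det_nonneg[OF pX0])
    hence "det N \<le> det X" using e1 dN ih c0 mult_left_mono[OF ih c0] by linarith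
    thus ?thesis using detMN by simp
  qed
qed



lemma enum_set_props: assumes "finite Z" shows "distinct (enum_set Z)" "set (enum_set Z) = Z"
proof -
  have "\<exists>xs. distinct xs \<and> set xs = Z" using finite_distinct_list[OF assms] by blast
  hence "distinct (enum_set Z) \<and> set (enum_set Z) = Z" unfolding enum_set_def by (rule someI_ex)
  thus "distinct (enum_set Z)" "set (enum_set Z) = Z" by auto
qed

lemma length_enum_set: "finite Z \<Longrightarrow> length (enum_set Z) = card Z"
  using enum_set_props distinct_card by metis

lemma vmat_carrier: "finite Z \<Longrightarrow> vmat d Z \<in> carrier_mat d (card Z)"
  unfolding vmat_def using length_enum_set by (metis mat_of_cols_carrier(1))

lemma gram_entry:
  assumes Z: "finite Z" and i: "i < d" and j: "j < d"
  shows "(vmat d Z * (vmat d Z)\<^sup>T) $$ (i,j) = (\<Sum>z\<in>Z. z$i * z$j)"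
proof -
  let ?xs = "enum_set Z"
  have c: "vmat d Z \<in> carrier_mat d (card Z)" by (rule vmat_carrier[OF Z])
  have "(vmat d Z * (vmat d Z)\<^sup>T) $$ (i,j) = (\<Sum>l<card Z. vmat d Z $$ (i,l) * (vmat d Z)\<^sup>T $$ (l,j))"
    by (rule mult_entry[OF c _ i j], insert c, auto)
  also have "\<dots> = (\<Sum>l<length ?xs. ?xs!l $ i * ?xs!l $ j)"
    using c i j length_enum_set[OF Z] by (intro sum.cong, auto simp: vmat_def mat_of_cols_index)
  also have "\<dots> = sum_list (map (\<lambda>z. z$i * z$j) ?xs)"
    by (subst sum_list_sum_nth, auto simp: atLeast0LessThan)
  also have "\<dots> = (\<Sum>z\<in>Z. z$i * z$j)"
    using sum_list_distinct_conv_sum_set[OF enum_set_props(1)[OF Z]] enum_set_props(2)[OF Z] by simp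
  finally show ?thesis .
qed

lemma gram_union:
  assumes "finite Z1" "finite Z2" "Z1 \<inter> Z2 = {}"
  shows "vmat d (Z1 \<union> Z2) * (vmat d (Z1 \<union> Z2))\<^sup>T = vmat d Z1 * (vmat d Z1)\<^sup>T + vmat d Z2 * (vmat d Z2)\<^sup>T"
proof -
  have c: "vmat d Z \<in> carrier_mat d (card Z)" if "finite Z" for Z using vmat_carrier[OF that] .
  show ?thesis
  proof (rule eq_matI)
    fix i j assume ij: "i < dim_row (vmat d Z1 * (vmat d Z1)\<^sup>T + vmat d Z2 * (vmat d Z2)\<^sup>T)"
      "j < dim_col (vmat d Z1 * (vmat d Z1)\<^sup>T + vmat d Z2 * (vmat d Z2)\<^sup>T)"
    hence i: "i < d" and j: "j < d" using c[OF assms(1)] c[OF assms(2)] by auto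
    have "(vmat d Z1 * (vmat d Z1)\<^sup>T + vmat d Z2 * (vmat d Z2)\<^sup>T) $$ (i,j)
       = (vmat d Z1 * (vmat d Z1)\<^sup>T) $$ (i,j) + (vmat d Z2 * (vmat d Z2)\<^sup>T) $$ (i,j)"
      using i j c[OF assms(1)] c[OF assms(2)] by simp
    also have "\<dots> = (\<Sum>z\<in>Z1. z$i * z$j) + (\<Sum>z\<in>Z2. z$i * z$j)"
      by (simp only: gram_entry[OF assms(1) i j] gram_entry[OF assms(2) i j])
    also have "\<dots> = (\<Sum>z\<in>Z1 \<union> Z2. z$i * z$j)" using assms by (simp add: sum.union_disjoint)
    also have "\<dots> = (vmat d (Z1 \<union> Z2) * (vmat d (Z1 \<union> Z2))\<^sup>T) $$ (i,j)"
      using gram_entry[of "Z1 \<union> Z2" i d j] assms i j by simp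
    finally show "(vmat d (Z1 \<union> Z2) * (vmat d (Z1 \<union> Z2))\<^sup>T) $$ (i,j) = (vmat d Z1 * (vmat d Z1)\<^sup>T + vmat d Z2 * (vmat d Z2)\<^sup>T) $$ (i,j)" by simp
  qed (insert c[OF assms(1)] c[OF assms(2)] c[of "Z1 \<union> Z2"] assms, auto)
qed

lemma inv_sym:
  fixes A :: "real mat"
  assumes A: "A \<in> carrier_mat n n" and At: "A\<^sup>T = A" and B: "B \<in> carrier_mat n n"
    and AB: "A * B = 1\<^sub>m n" and BA: "B * A = 1\<^sub>m n"
  shows "B\<^sup>T = B"
proof -
  have "B\<^sup>T * A = (A * B)\<^sup>T" using transpose_mult[OF A B] At by simp
  hence BtA: "B\<^sup>T * A = 1\<^sub>m n" using AB by simp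
  have "B\<^sup>T = B\<^sup>T * (A * B)" using AB B by simp
  also have "\<dots> = (B\<^sup>T * A) * B" using A B by simp
  also have "\<dots> = B" using BtA B by simp
  finally show ?thesis .
qed

lemma psd_inv:
  assumes A: "psd n A" and B: "B \<in> carrier_mat n n"
    and AB: "A * B = 1\<^sub>m n" and BA: "B * A = 1\<^sub>m n"
  shows "psd n B"
proof -
  have Ac: "A \<in> carrier_mat n n" and At: "A\<^sup>T = A" using A unfolding psd_def by auto
  have Bt: "B\<^sup>T = B" by (rule inv_sym[OF Ac At B AB BA])
  have "B * A * B\<^sup>T = B" using BA Bt B by simp
  thus ?thesis using psd_congr[OF A B] by simp
qed

lemma mat_inv_props:
  assumes inv: "invertible_mat A" and A: "A \<in> carrier_mat n n"
  shows "mat_inv A \<in> carrier_mat n n" "A * mat_inv A = 1\<^sub>m n" "mat_inv A * A = 1\<^sub>m n"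
proof -
  obtain B where AB: "A * B = 1\<^sub>m (dim_row A)" and BA: "B * A = 1\<^sub>m (dim_row B)"
    using inv unfolding invertible_mat_def inverts_mat_def by blast
  have "dim_col B = n" using arg_cong[OF AB, of dim_col] A by simp
  moreover have "dim_row B = n" using arg_cong[OF BA, of dim_col] A by simp
  ultimately have Bc: "B \<in> carrier_mat n n" by auto
  have ex: "\<exists>B. B \<in> carrier_mat (dim_row A) (dim_row A) \<and> A * B = 1\<^sub>m (dim_row A) \<and> B * A = 1\<^sub>m (dim_row A)"
    using Bc AB BA A by auto
  have "mat_inv A \<in> carrier_mat (dim_row A) (dim_row A) \<and> A * mat_inv A = 1\<^sub>m (dim_row A) \<and> mat_inv A * A = 1\<^sub>m (dim_row A)"
    unfolding mat_inv_def by (rule someI_ex[OF ex])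
  thus "mat_inv A \<in> carrier_mat n n" "A * mat_inv A = 1\<^sub>m n" "mat_inv A * A = 1\<^sub>m n" using A by auto
qed

lemma sylvester:
  fixes X Y :: "real mat"
  assumes X: "X \<in> carrier_mat n m" and Y: "Y \<in> carrier_mat m n"
  shows "det (1\<^sub>m n + X * Y) = det (1\<^sub>m m + Y * X)"
proof -
  have XY: "X * Y \<in> carrier_mat n n" and YX: "Y * X \<in> carrier_mat m m" using X Y by auto
  let ?K = "four_block_mat (1\<^sub>m n) (-X) Y (1\<^sub>m m)"
  have e1: "four_block_mat (1\<^sub>m n + X * Y) (-X) (0\<^sub>m m n) (1\<^sub>m m) * four_block_mat (1\<^sub>m n) (0\<^sub>m n m) Y (1\<^sub>m m) = ?K"
  proof -
    have "four_block_mat (1\<^sub>m n + X * Y) (-X) (0\<^sub>m m n) (1\<^sub>m m) * four_block_mat (1\<^sub>m n) (0\<^sub>m n m) Y (1\<^sub>m m)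
      = four_block_mat ((1\<^sub>m n + X * Y) * 1\<^sub>m n + (-X) * Y) ((1\<^sub>m n + X * Y) * 0\<^sub>m n m + (-X) * 1\<^sub>m m)
          (0\<^sub>m m n * 1\<^sub>m n + 1\<^sub>m m * Y) (0\<^sub>m m n * 0\<^sub>m n m + 1\<^sub>m m * 1\<^sub>m m)"
      by (rule mult_four_block_mat, insert X Y XY, auto)
    also have "\<dots> = ?K"
      by (rule cong_four_block_mat, insert X Y XY, auto intro!: eq_matI)
    finally show ?thesis .
  qed
  have e2: "four_block_mat (1\<^sub>m n) (0\<^sub>m n m) Y (1\<^sub>m m) * four_block_mat (1\<^sub>m n) (-X) (0\<^sub>m m n) (1\<^sub>m m + Y * X) = ?K"
  proof -
    have "four_block_mat (1\<^sub>m n) (0\<^sub>m n m) Y (1\<^sub>m m) * four_block_mat (1\<^sub>m n) (-X) (0\<^sub>m m n) (1\<^sub>m m + Y * X)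
      = four_block_mat (1\<^sub>m n * 1\<^sub>m n + 0\<^sub>m n m * 0\<^sub>m m n) (1\<^sub>m n * (-X) + 0\<^sub>m n m * (1\<^sub>m m + Y * X))
          (Y * 1\<^sub>m n + 1\<^sub>m m * 0\<^sub>m m n) (Y * (-X) + 1\<^sub>m m * (1\<^sub>m m + Y * X))"
      by (rule mult_four_block_mat, insert X Y YX, auto)
    also have "\<dots> = ?K"
      by (rule cong_four_block_mat, insert X Y YX, auto intro!: eq_matI)
    finally show ?thesis .
  qed
  have d1: "det (four_block_mat (1\<^sub>m n + X * Y) (-X) (0\<^sub>m m n) (1\<^sub>m m)) = det (1\<^sub>m n + X * Y)"
    using det_four_block_mat_lower_left_zero[of "1\<^sub>m n + X * Y" n "-X" m "0\<^sub>m m n" "1\<^sub>m m"] X XY by auto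
  have d2: "det (four_block_mat (1\<^sub>m n) (0\<^sub>m n m) Y (1\<^sub>m m)) = 1"
    using det_four_block_mat_upper_right_zero[of "1\<^sub>m n" n "0\<^sub>m n m" m Y "1\<^sub>m m"] Y by auto
  have d3: "det (four_block_mat (1\<^sub>m n) (-X) (0\<^sub>m m n) (1\<^sub>m m + Y * X)) = det (1\<^sub>m m + Y * X)"
    using det_four_block_mat_lower_left_zero[of "1\<^sub>m n" n "-X" m "0\<^sub>m m n" "1\<^sub>m m + Y * X"] X YX by auto
  have "det ?K = det (1\<^sub>m n + X * Y)"
    using arg_cong[OF e1, of det] det_mult[of "four_block_mat (1\<^sub>m n + X * Y) (-X) (0\<^sub>m m n) (1\<^sub>m m)" "n + m"
        "four_block_mat (1\<^sub>m n) (0\<^sub>m n m) Y (1\<^sub>m m)"] d1 d2 X Y XY by auto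
  moreover have "det ?K = det (1\<^sub>m m + Y * X)"
    using arg_cong[OF e2, of det] det_mult[of "four_block_mat (1\<^sub>m n) (0\<^sub>m n m) Y (1\<^sub>m m)" "n + m"
        "four_block_mat (1\<^sub>m n) (-X) (0\<^sub>m m n) (1\<^sub>m m + Y * X)"] d2 d3 X Y YX by auto
  ultimately show ?thesis by simp
qed

lemma neg_cancel_mat:
  fixes X H :: "real mat"
  assumes "X \<in> carrier_mat n n" "H \<in> carrier_mat n n"
  shows "- X + (H + X) = H"
  by (rule eq_matI, insert assms, auto)

lemma block_det:
  fixes D Q H Di :: "real mat"
  assumes D: "D \<in> carrier_mat k k" and Q: "Q \<in> carrier_mat k k" and H: "H \<in> carrier_mat k k"
    and Di: "Di \<in> carrier_mat k k" and DDi: "D * Di = 1\<^sub>m k"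
  shows "det (four_block_mat D Q (-(Q\<^sup>T)) H) = det D * det (H + Q\<^sup>T * Di * Q)"
proof -
  have QT: "Q\<^sup>T \<in> carrier_mat k k" using Q by simp
  have S: "Q\<^sup>T * Di * Q \<in> carrier_mat k k" using Q Di by auto
  have DiQ: "Di * Q \<in> carrier_mat k k" using Q Di by auto
  have nQT: "-(Q\<^sup>T) \<in> carrier_mat k k" using QT by simp
  have HS: "H + Q\<^sup>T * Di * Q \<in> carrier_mat k k" using H S by simp
  have b2: "D * (Di * Q) + 0\<^sub>m k k * (H + Q\<^sup>T * Di * Q) = Q"
  proof -
    have "D * (Di * Q) = (D * Di) * Q" by (rule assoc_mult_mat[symmetric, OF D Di Q])
    also have "\<dots> = Q" unfolding DDi using Q by simp
    finally have "D * (Di * Q) = Q" .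
    thus ?thesis using Q H S by simp
  qed
  have b4: "-(Q\<^sup>T) * (Di * Q) + 1\<^sub>m k * (H + Q\<^sup>T * Di * Q) = H"
  proof -
    have "Q\<^sup>T * (Di * Q) = Q\<^sup>T * Di * Q" using QT Di Q by simp
    moreover have "-(Q\<^sup>T) * (Di * Q) = - (Q\<^sup>T * (Di * Q))" by (rule uminus_mult_left_mat, insert QT DiQ Di, simp)
    ultimately have "-(Q\<^sup>T) * (Di * Q) = - (Q\<^sup>T * Di * Q)" by (simp only:)
    hence "-(Q\<^sup>T) * (Di * Q) + 1\<^sub>m k * (H + Q\<^sup>T * Di * Q) = - (Q\<^sup>T * Di * Q) + (H + Q\<^sup>T * Di * Q)"
      using H S by (simp only: left_mult_one_mat[OF add_carrier_mat[OF S]])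
    also have "\<dots> = H" by (rule neg_cancel_mat[OF S H])
    finally show ?thesis .
  qed
  have e: "four_block_mat D (0\<^sub>m k k) (-(Q\<^sup>T)) (1\<^sub>m k) * four_block_mat (1\<^sub>m k) (Di * Q) (0\<^sub>m k k) (H + Q\<^sup>T * Di * Q)
     = four_block_mat D Q (-(Q\<^sup>T)) H"
  proof -
    have "four_block_mat D (0\<^sub>m k k) (-(Q\<^sup>T)) (1\<^sub>m k) * four_block_mat (1\<^sub>m k) (Di * Q) (0\<^sub>m k k) (H + Q\<^sup>T * Di * Q)
      = four_block_mat (D * 1\<^sub>m k + 0\<^sub>m k k * 0\<^sub>m k k) (D * (Di * Q) + 0\<^sub>m k k * (H + Q\<^sup>T * Di * Q))
          (-(Q\<^sup>T) * 1\<^sub>m k + 1\<^sub>m k * 0\<^sub>m k k) (-(Q\<^sup>T) * (Di * Q) + 1\<^sub>m k * (H + Q\<^sup>T * Di * Q))"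
      by (rule mult_four_block_mat[OF D zero_carrier_mat nQT one_carrier_mat one_carrier_mat DiQ zero_carrier_mat HS])
    also have "\<dots> = four_block_mat D Q (-(Q\<^sup>T)) H"
    proof (rule cong_four_block_mat[OF _ b2 _ b4])
      show "D * 1\<^sub>m k + 0\<^sub>m k k * 0\<^sub>m k k = D" using D by simp
      show "-(Q\<^sup>T) * 1\<^sub>m k + 1\<^sub>m k * 0\<^sub>m k k = -(Q\<^sup>T)" using QT by simp
    qed
    finally show ?thesis .
  qed
  have d1: "det (four_block_mat D (0\<^sub>m k k) (-(Q\<^sup>T)) (1\<^sub>m k)) = det D"
    using det_four_block_mat_upper_right_zero[of D k "0\<^sub>m k k" k "-(Q\<^sup>T)" "1\<^sub>m k"] D QT by auto
  have d2: "det (four_block_mat (1\<^sub>m k) (Di * Q) (0\<^sub>m k k) (H + Q\<^sup>T * Di * Q)) = det (H + Q\<^sup>T * Di * Q)"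
    using det_four_block_mat_lower_left_zero[of "1\<^sub>m k" k "Di * Q" k "0\<^sub>m k k" "H + Q\<^sup>T * Di * Q"] DiQ H S by auto
  have F1: "four_block_mat D (0\<^sub>m k k) (-(Q\<^sup>T)) (1\<^sub>m k) \<in> carrier_mat (k+k) (k+k)"
    using four_block_carrier_mat[OF D one_carrier_mat] by simp
  have F2: "four_block_mat (1\<^sub>m k) (Di * Q) (0\<^sub>m k k) (H + Q\<^sup>T * Di * Q) \<in> carrier_mat (k+k) (k+k)"
    using four_block_carrier_mat[OF one_carrier_mat HS] by simp
  have "det (four_block_mat D Q (-(Q\<^sup>T)) H) = det (four_block_mat D (0\<^sub>m k k) (-(Q\<^sup>T)) (1\<^sub>m k) * four_block_mat (1\<^sub>m k) (Di * Q) (0\<^sub>m k k) (H + Q\<^sup>T * Di * Q))"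
    unfolding e ..
  also have "\<dots> = det (four_block_mat D (0\<^sub>m k k) (-(Q\<^sup>T)) (1\<^sub>m k)) * det (four_block_mat (1\<^sub>m k) (Di * Q) (0\<^sub>m k k) (H + Q\<^sup>T * Di * Q))"
    by (rule det_mult[OF F1 F2])
  finally show ?thesis unfolding d1 d2 .
qed

lemma H_psd:
  fixes G Yv Ai :: "real mat"
  assumes G: "psd d G" and Yv: "Yv \<in> carrier_mat d k" and Ai: "Ai \<in> carrier_mat d d"
    and AAi: "(G + Yv * Yv\<^sup>T) * Ai = 1\<^sub>m d" and Ait: "Ai\<^sup>T = Ai"
  shows "psd k (1\<^sub>m k - Yv\<^sup>T * Ai * Yv)"
proof -
  have Gc: "G \<in> carrier_mat d d" and Gq: "\<And>x. x \<in> carrier_vec d \<Longrightarrow> 0 \<le> x \<bullet> (G *\<^sub>v x)"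
    using G unfolding psd_def by auto
  have YT: "Yv\<^sup>T \<in> carrier_mat k d" using Yv by simp
  have R: "Yv\<^sup>T * Ai * Yv \<in> carrier_mat k k" using Yv Ai by auto
  have c: "1\<^sub>m k - Yv\<^sup>T * Ai * Yv \<in> carrier_mat k k" using R by (simp add: minus_carrier_mat)
  have Rt: "(Yv\<^sup>T * Ai * Yv)\<^sup>T = Yv\<^sup>T * Ai * Yv"
  proof -
    have YA: "Yv\<^sup>T * Ai \<in> carrier_mat k d" using YT Ai by simp
    have "(Yv\<^sup>T * Ai * Yv)\<^sup>T = Yv\<^sup>T * (Yv\<^sup>T * Ai)\<^sup>T" by (rule transpose_mult[OF YA Yv])
    also have "(Yv\<^sup>T * Ai)\<^sup>T = Ai * Yv" using transpose_mult[OF YT Ai] Ait by simp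
    also have "Yv\<^sup>T * (Ai * Yv) = Yv\<^sup>T * Ai * Yv" using YT Ai Yv by simp
    finally show ?thesis .
  qed
  have t: "(1\<^sub>m k - Yv\<^sup>T * Ai * Yv)\<^sup>T = 1\<^sub>m k - Yv\<^sup>T * Ai * Yv"
    using transpose_minus[of "1\<^sub>m k" k k "Yv\<^sup>T * Ai * Yv"] R Rt by simp
  have q: "0 \<le> x \<bullet> ((1\<^sub>m k - Yv\<^sup>T * Ai * Yv) *\<^sub>v x)" if x: "x \<in> carrier_vec k" for x
  proof -
    define u where "u = Yv *\<^sub>v x"
    define z where "z = Ai *\<^sub>v u"
    define w where "w = Yv\<^sup>T *\<^sub>v z"
    have uc: "u \<in> carrier_vec d" unfolding u_def using Yv x by simp
    have zc: "z \<in> carrier_vec d" unfolding z_def using Ai uc by simp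
    have wc: "w \<in> carrier_vec k" unfolding w_def using YT zc by simp
    have Rx: "(Yv\<^sup>T * Ai * Yv) *\<^sub>v x = w"
      unfolding w_def z_def u_def using Yv Ai x
      by (simp add: assoc_mult_mat_vec[of _ k d _ k x] assoc_mult_mat_vec[of _ k d _ d])
    have e1: "x \<bullet> ((1\<^sub>m k - Yv\<^sup>T * Ai * Yv) *\<^sub>v x) = x \<bullet> x - x \<bullet> w"
      using x R Rx wc by (simp add: minus_mult_distrib_mat_vec[of _ k k] scalar_prod_minus_distrib[of _ k])
    have Az: "(G + Yv * Yv\<^sup>T) *\<^sub>v z = u"
    proof -
      have "(G + Yv * Yv\<^sup>T) *\<^sub>v z = ((G + Yv * Yv\<^sup>T) * Ai) *\<^sub>v u"
        unfolding z_def using Gc Yv Ai uc by (subst assoc_mult_mat_vec[of _ d d _ d], auto)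
      thus ?thesis using AAi uc by simp
    qed
    have "z \<bullet> ((G + Yv * Yv\<^sup>T) *\<^sub>v z) = z \<bullet> (G *\<^sub>v z) + z \<bullet> (Yv *\<^sub>v w)"
      unfolding w_def using Gc Yv zc
      by (simp add: add_mult_distrib_mat_vec[of _ d d] scalar_prod_add_distrib[of _ d] assoc_mult_mat_vec[of _ d k _ d])
    also have "z \<bullet> (Yv *\<^sub>v w) = w \<bullet> w" unfolding w_def by (rule scalar_transpose_move[OF Yv zc], insert YT zc, simp)
    finally have e2: "z \<bullet> u = z \<bullet> (G *\<^sub>v z) + w \<bullet> w" using Az by simp
    have e3: "z \<bullet> u = w \<bullet> x" unfolding u_def w_def by (rule scalar_transpose_move[OF Yv zc x])
    have ww: "w \<bullet> w \<le> w \<bullet> x" using e2 e3 Gq[OF zc] by simp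
    have "0 \<le> (x - w) \<bullet> (x - w)" by (rule self_scalar_nonneg)
    also have "(x - w) \<bullet> (x - w) = x \<bullet> x - 2 * (w \<bullet> x) + w \<bullet> w"
      using x wc comm_scalar_prod[OF x wc]
      by (simp add: minus_scalar_prod_distrib[of _ k] scalar_prod_minus_distrib[of _ k])
    finally have "0 \<le> x \<bullet> x - x \<bullet> w" using ww comm_scalar_prod[OF x wc] by simp
    thus ?thesis using e1 by simp
  qed
  show ?thesis unfolding psd_def using c t q by auto
qed



lemma opq1: "X \<in> carrier_mat n n \<Longrightarrow> Z \<in> carrier_mat n n \<Longrightarrow> 0\<^sub>m n n + (X + Z) = X + (Z::real mat)"
  by (rule eq_matI, auto)
lemma opq2: "X \<in> carrier_mat n n \<Longrightarrow> 1\<^sub>m n + (- X + 0\<^sub>m n n) = 1\<^sub>m n - (X::real mat)"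
  by (rule eq_matI, auto)
lemma opq3: "X \<in> carrier_mat n n \<Longrightarrow> 0\<^sub>m n n + (- X + 0\<^sub>m n n) = - (X::real mat)"
  by (rule eq_matI, auto)
lemma opq4: "G \<in> carrier_mat n n \<Longrightarrow> Y \<in> carrier_mat n n \<Longrightarrow> Z \<in> carrier_mat n n \<Longrightarrow>
  (G + Y) * 1\<^sub>m n + (Z + - Y) = G + (Z::real mat)"
  by (rule eq_matI, auto)
lemma opq5: "X \<in> carrier_mat n n \<Longrightarrow> 1\<^sub>m n + (X + 0\<^sub>m n n) = 1\<^sub>m n + (X::real mat)"
  by (rule eq_matI, auto)

lemma four_block_00:
  assumes "A \<in> carrier_mat n m" "B \<in> carrier_mat n 0" "C \<in> carrier_mat 0 m" "D \<in> carrier_mat 0 0"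
  shows "four_block_mat A B C D = A"
  by (rule eq_matI, insert assms, auto)

lemma adj_inv:
  fixes D :: "real mat"
  assumes D: "D \<in> carrier_mat n n" and d: "det D \<noteq> 0"
  defines "Di \<equiv> (1 / det D) \<cdot>\<^sub>m adj_mat D"
  shows "Di \<in> carrier_mat n n" "D * Di = 1\<^sub>m n" "Di * D = 1\<^sub>m n"
proof -
  note a = adj_mat[OF D]
  show "Di \<in> carrier_mat n n" unfolding Di_def using a(1) by simp
  have "D * Di = (1 / det D) \<cdot>\<^sub>m (D * adj_mat D)" unfolding Di_def
    by (rule mult_smult_distrib[OF D a(1)])
  also have "\<dots> = 1\<^sub>m n" unfolding a(2) using d by (intro eq_matI, auto)
  finally show "D * Di = 1\<^sub>m n" .
  have "Di * D = (1 / det D) \<cdot>\<^sub>m (adj_mat D * D)" unfolding Di_def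
    by (rule mult_smult_assoc_mat[OF a(1) D])
  also have "\<dots> = 1\<^sub>m n" unfolding a(3) using d by (intro eq_matI, auto)
  finally show "Di * D = 1\<^sub>m n" .
qed



theorem mainTheorem7:
  fixes d r :: nat and S T :: "real vec set"
  assumes "S \<subseteq> carrier_vec d" and "T \<subseteq> carrier_vec d"
    and "finite S" and "finite T"
    and "card S = r" and "card T = r"
    and "card ((S - T) \<union> (T - S)) \<le> 2 * d"
    and "invertible_mat (vmat d S * (vmat d S)\<^sup>T)"
  shows "det (vmat d T * (vmat d T)\<^sup>T) \<ge>
           det (vmat d S * (vmat d S)\<^sup>T) *
           (det ((vmat d (T - S))\<^sup>T * mat_inv (vmat d S * (vmat d S)\<^sup>T) * vmat d (S - T)))\<^sup>2"
proof -
  note fS = assms(3) and fT = assms(4)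
  define k where "k = card (T - S)"
  have kS: "card (S - T) = k"
  proof -
    have "card (S - T) = card S - card (S \<inter> T)" by (rule card_Diff_subset_Int, insert fS, auto)
    moreover have "card (T - S) = card T - card (T \<inter> S)" by (rule card_Diff_subset_Int, insert fT, auto)
    ultimately show ?thesis unfolding k_def using assms(5,6) by (simp add: Int_commute)
  qed
  define W where "W = S \<inter> T"
  have fW: "finite W" unfolding W_def using fS by simp
  have fST: "finite (S - T)" and fTS: "finite (T - S)" using fS fT by auto
  define A where "A = vmat d S * (vmat d S)\<^sup>T"
  define B where "B = vmat d T * (vmat d T)\<^sup>T"
  define G where "G = vmat d W * (vmat d W)\<^sup>T"
  define U where "U = vmat d (T - S)"
  define Yv where "Yv = vmat d (S - T)"
  have Uc: "U \<in> carrier_mat d k" unfolding U_def k_def by (rule vmat_carrier[OF fTS])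
  have Yc: "Yv \<in> carrier_mat d k" unfolding Yv_def using vmat_carrier[OF fST] kS by simp
  have UT: "U\<^sup>T \<in> carrier_mat k d" and YT: "Yv\<^sup>T \<in> carrier_mat k d" using Uc Yc by auto
  have pA: "psd d A" unfolding A_def by (rule psd_gram[OF vmat_carrier[OF fS]])
  have pG: "psd d G" unfolding G_def by (rule psd_gram[OF vmat_carrier[OF fW]])
  have Ac: "A \<in> carrier_mat d d" and Gc: "G \<in> carrier_mat d d" and At: "A\<^sup>T = A"
    using pA pG unfolding psd_def by auto
  have UUc: "U * U\<^sup>T \<in> carrier_mat d d" and YYc: "Yv * Yv\<^sup>T \<in> carrier_mat d d" using Uc Yc by auto
  have hA: "A = G + Yv * Yv\<^sup>T"
  proof -
    have "S = W \<union> (S - T)" unfolding W_def by auto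
    hence "A = vmat d (W \<union> (S - T)) * (vmat d (W \<union> (S - T)))\<^sup>T" unfolding A_def by simp
    also have "\<dots> = G + Yv * Yv\<^sup>T" unfolding G_def Yv_def by (rule gram_union[OF fW fST], auto simp: W_def)
    finally show ?thesis .
  qed
  have hB: "B = G + U * U\<^sup>T"
  proof -
    have "T = W \<union> (T - S)" unfolding W_def by auto
    hence "B = vmat d (W \<union> (T - S)) * (vmat d (W \<union> (T - S)))\<^sup>T" unfolding B_def by simp
    also have "\<dots> = G + U * U\<^sup>T" unfolding G_def U_def by (rule gram_union[OF fW fTS], auto simp: W_def)
    finally show ?thesis .
  qed
  define Ai where "Ai = mat_inv A"
  have inv: "invertible_mat A" using assms(8) unfolding A_def .
  note AiP = mat_inv_props[OF inv Ac, folded Ai_def]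
  have Aic: "Ai \<in> carrier_mat d d" using AiP(1) .
  have Ait: "Ai\<^sup>T = Ai" by (rule inv_sym[OF Ac At Aic AiP(2) AiP(3)])
  have pAi: "psd d Ai" by (rule psd_inv[OF pA Aic AiP(2) AiP(3)])
  define P where "P = U\<^sup>T * Ai * U"
  define Q where "Q = U\<^sup>T * Ai * Yv"
  define H where "H = 1\<^sub>m k - Yv\<^sup>T * Ai * Yv"
  have pP: "psd k P" unfolding P_def using psd_congr[OF pAi UT] by simp
  have Pc: "P \<in> carrier_mat k k" using pP unfolding psd_def by auto
  have Qc: "Q \<in> carrier_mat k k" unfolding Q_def using UT Aic Yc by auto
  have pH: "psd k H" unfolding H_def by (rule H_psd[OF pG Yc Aic _ Ait], insert AiP(2) hA, simp)
  have Hc: "H \<in> carrier_mat k k" using pH unfolding psd_def by auto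
  define D where "D = 1\<^sub>m k + P"
  have pD: "psd k D" unfolding D_def by (rule psd_add[OF psd_one pP])
  have Dc: "D \<in> carrier_mat k k" using pD unfolding psd_def by auto
  have detD: "1 \<le> det D"
  proof -
    have "det (1\<^sub>m k) \<le> det (P + 1\<^sub>m k)" by (rule psd_det_mono[OF pP psd_one])
    moreover have "P + 1\<^sub>m k = D" unfolding D_def using Pc by (simp add: comm_add_mat[of _ k k])
    ultimately show ?thesis by simp
  qed
  define Di where "Di = (1 / det D) \<cdot>\<^sub>m adj_mat D"
  have dD0: "det D \<noteq> 0" using detD by simp
  note DiP = adj_inv[OF Dc dD0, folded Di_def]
  have pDi: "psd k Di" by (rule psd_inv[OF pD DiP])
  have detDDi: "det D * det Di = 1"
    using det_mult[OF Dc DiP(1)] DiP(2) by simp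
  define Xl where "Xl = four_block_mat (Ai * U) (Ai * Yv) (0\<^sub>m 0 k) (0\<^sub>m 0 k)"
  define Yr where "Yr = four_block_mat (U\<^sup>T) (0\<^sub>m k 0) (-(Yv\<^sup>T)) (0\<^sub>m k 0)"
  have AiU: "Ai * U \<in> carrier_mat d k" and AiY: "Ai * Yv \<in> carrier_mat d k" using Aic Uc Yc by auto
  have nYT: "-(Yv\<^sup>T) \<in> carrier_mat k d" using YT by simp
  have Xlc: "Xl \<in> carrier_mat d (k + k)"
    unfolding Xl_def using four_block_carrier_mat[OF AiU, of "0\<^sub>m 0 k" 0 k] by simp
  have Yrc: "Yr \<in> carrier_mat (k + k) d"
    unfolding Yr_def using four_block_carrier_mat[OF UT, of "0\<^sub>m k 0" k 0] by simp
  define E1 where "E1 = Ai * U * U\<^sup>T + Ai * Yv * (-(Yv\<^sup>T))"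
  have E1c: "E1 \<in> carrier_mat d d" unfolding E1_def using AiU AiY UT nYT by auto
  have XY: "Xl * Yr = E1"
  proof -
    have "Xl * Yr = four_block_mat (Ai * U * U\<^sup>T + Ai * Yv * (-(Yv\<^sup>T))) (Ai * U * 0\<^sub>m k 0 + Ai * Yv * 0\<^sub>m k 0)
        (0\<^sub>m 0 k * U\<^sup>T + 0\<^sub>m 0 k * (-(Yv\<^sup>T))) (0\<^sub>m 0 k * 0\<^sub>m k 0 + 0\<^sub>m 0 k * 0\<^sub>m k 0)"
      unfolding Xl_def Yr_def
      by (rule mult_four_block_mat[OF AiU AiY zero_carrier_mat zero_carrier_mat UT zero_carrier_mat nYT zero_carrier_mat])
    also have "\<dots> = E1" unfolding E1_def
      by (rule four_block_00, insert AiU AiY UT nYT, auto)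
    finally show ?thesis .
  qed
  have YX: "Yr * Xl = four_block_mat (U\<^sup>T * (Ai * U) + 0\<^sub>m k 0 * 0\<^sub>m 0 k) (U\<^sup>T * (Ai * Yv) + 0\<^sub>m k 0 * 0\<^sub>m 0 k)
        (-(Yv\<^sup>T) * (Ai * U) + 0\<^sub>m k 0 * 0\<^sub>m 0 k) (-(Yv\<^sup>T) * (Ai * Yv) + 0\<^sub>m k 0 * 0\<^sub>m 0 k)"
    unfolding Xl_def Yr_def
    by (rule mult_four_block_mat[OF UT zero_carrier_mat nYT zero_carrier_mat AiU AiY zero_carrier_mat zero_carrier_mat])
  have blk: "1\<^sub>m (k + k) + Yr * Xl = four_block_mat D Q (-(Q\<^sup>T)) H"
  proof -
    have UAU: "U\<^sup>T * (Ai * U) \<in> carrier_mat k k" and UAY: "U\<^sup>T * (Ai * Yv) \<in> carrier_mat k k"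
      and YAU: "Yv\<^sup>T * (Ai * U) \<in> carrier_mat k k" and YAY: "Yv\<^sup>T * (Ai * Yv) \<in> carrier_mat k k"
      using UT YT AiU AiY by auto
    have z: "0\<^sub>m k 0 * 0\<^sub>m 0 k = (0\<^sub>m k k :: real mat)" by (rule eq_matI, auto)
    have YAU': "-(Yv\<^sup>T) * (Ai * U) \<in> carrier_mat k k" and YAY': "-(Yv\<^sup>T) * (Ai * Yv) \<in> carrier_mat k k"
      using nYT AiU AiY by (metis mult_carrier_mat)+
    have c1: "U\<^sup>T * (Ai * U) + 0\<^sub>m k k \<in> carrier_mat k k" by (rule add_carrier_mat[OF zero_carrier_mat])
    have c2: "U\<^sup>T * (Ai * Yv) + 0\<^sub>m k k \<in> carrier_mat k k" by (rule add_carrier_mat[OF zero_carrier_mat])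
    have c3: "-(Yv\<^sup>T) * (Ai * U) + 0\<^sub>m k k \<in> carrier_mat k k" by (rule add_carrier_mat[OF zero_carrier_mat])
    have c4: "-(Yv\<^sup>T) * (Ai * Yv) + 0\<^sub>m k k \<in> carrier_mat k k" by (rule add_carrier_mat[OF zero_carrier_mat])
    have "1\<^sub>m (k + k) + Yr * Xl = four_block_mat (1\<^sub>m k) (0\<^sub>m k k) (0\<^sub>m k k) (1\<^sub>m k) + Yr * Xl" by simp
    also have "\<dots> = four_block_mat (1\<^sub>m k + (U\<^sup>T * (Ai * U) + 0\<^sub>m k k)) (0\<^sub>m k k + (U\<^sup>T * (Ai * Yv) + 0\<^sub>m k k))
        (0\<^sub>m k k + (-(Yv\<^sup>T) * (Ai * U) + 0\<^sub>m k k)) (1\<^sub>m k + (-(Yv\<^sup>T) * (Ai * Yv) + 0\<^sub>m k k))"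
      unfolding YX z
      by (rule add_four_block_mat[OF one_carrier_mat zero_carrier_mat zero_carrier_mat one_carrier_mat c1 c2 c3 c4])
    also have "\<dots> = four_block_mat D Q (-(Q\<^sup>T)) H"
    proof (rule cong_four_block_mat)
      show "1\<^sub>m k + (U\<^sup>T * (Ai * U) + 0\<^sub>m k k) = D" unfolding D_def P_def
        using opq5[OF UAU] UT Aic Uc by simp
      show "0\<^sub>m k k + (U\<^sup>T * (Ai * Yv) + 0\<^sub>m k k) = Q" unfolding Q_def
        using opq1[OF UAY zero_carrier_mat] UT Aic Yc UAY by simp
      have m1: "-(Yv\<^sup>T) * (Ai * U) = - (Yv\<^sup>T * (Ai * U))"
        by (rule uminus_mult_left_mat, insert YT AiU Aic, simp)
      have qt: "Q\<^sup>T = Yv\<^sup>T * (Ai * U)"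
      proof -
        have UA: "U\<^sup>T * Ai \<in> carrier_mat k d" using UT Aic by simp
        have "Q\<^sup>T = Yv\<^sup>T * (U\<^sup>T * Ai)\<^sup>T" unfolding Q_def by (rule transpose_mult[OF UA Yc])
        also have "(U\<^sup>T * Ai)\<^sup>T = Ai * U" using transpose_mult[OF UT Aic] Ait by simp
        finally show ?thesis .
      qed
      show "0\<^sub>m k k + (-(Yv\<^sup>T) * (Ai * U) + 0\<^sub>m k k) = -(Q\<^sup>T)"
        unfolding m1 qt by (rule opq3[OF YAU])
      have m2: "-(Yv\<^sup>T) * (Ai * Yv) = - (Yv\<^sup>T * (Ai * Yv))"
        by (rule uminus_mult_left_mat, insert YT AiY Aic, simp)
      have hh: "H = 1\<^sub>m k - Yv\<^sup>T * (Ai * Yv)" unfolding H_def using YT Aic Yc by simp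
      show "1\<^sub>m k + (-(Yv\<^sup>T) * (Ai * Yv) + 0\<^sub>m k k) = H"
        unfolding m2 hh by (rule opq2[OF YAY])
    qed
    finally show ?thesis .
  qed
  have AE: "A * (1\<^sub>m d + E1) = B"
  proof -
    have AiUU: "Ai * U * U\<^sup>T \<in> carrier_mat d d" using AiU UT by (metis mult_carrier_mat)
    have AiYY: "Ai * Yv * (-(Yv\<^sup>T)) \<in> carrier_mat d d" using AiY nYT by (metis mult_carrier_mat)
    have "A * (1\<^sub>m d + E1) = A * 1\<^sub>m d + A * E1" by (rule mult_add_distrib_mat[OF Ac one_carrier_mat E1c])
    also have "A * E1 = A * (Ai * U * U\<^sup>T) + A * (Ai * Yv * (-(Yv\<^sup>T)))"
      unfolding E1_def by (rule mult_add_distrib_mat[OF Ac AiUU AiYY])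
    also have "A * (Ai * U * U\<^sup>T) = U * U\<^sup>T"
    proof -
      have "A * (Ai * U * U\<^sup>T) = A * (Ai * (U * U\<^sup>T))" using assoc_mult_mat[OF Aic Uc UT] by simp
      also have "\<dots> = (A * Ai) * (U * U\<^sup>T)" by (rule assoc_mult_mat[symmetric, OF Ac Aic UUc])
      also have "\<dots> = U * U\<^sup>T" unfolding AiP(2) by (rule left_mult_one_mat[OF UUc])
      finally show ?thesis .
    qed
    also have "A * (Ai * Yv * (-(Yv\<^sup>T))) = - (Yv * Yv\<^sup>T)"
    proof -
      have YnY: "Yv * (-(Yv\<^sup>T)) \<in> carrier_mat d d" using Yc nYT by (metis mult_carrier_mat)
      have "A * (Ai * Yv * (-(Yv\<^sup>T))) = A * (Ai * (Yv * (-(Yv\<^sup>T))))" using assoc_mult_mat[OF Aic Yc nYT] by simp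
      also have "\<dots> = (A * Ai) * (Yv * (-(Yv\<^sup>T)))" by (rule assoc_mult_mat[symmetric, OF Ac Aic YnY])
      also have "\<dots> = Yv * (-(Yv\<^sup>T))" unfolding AiP(2) by (rule left_mult_one_mat[OF YnY])
      also have "\<dots> = - (Yv * Yv\<^sup>T)" by (rule uminus_mult_right_mat, insert Yc YT, simp)
      finally show ?thesis .
    qed
    also have "A * 1\<^sub>m d + (U * U\<^sup>T + - (Yv * Yv\<^sup>T)) = B"
      unfolding hA hB by (rule opq4[OF Gc YYc UUc])
    finally show ?thesis .
  qed
  define Sm where "Sm = Q\<^sup>T * Di * Q"
  have pSm: "psd k Sm" unfolding Sm_def using psd_congr[OF pDi, of "Q\<^sup>T" k] Qc by simp
  have detB: "det B = det A * (det D * det (H + Sm))"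
  proof -
    have "det B = det A * det (1\<^sub>m d + E1)" unfolding AE[symmetric]
      by (rule det_mult[OF Ac], insert E1c, simp)
    also have "det (1\<^sub>m d + E1) = det (1\<^sub>m (k + k) + Yr * Xl)" unfolding XY[symmetric] by (rule sylvester[OF Xlc Yrc])
    also have "\<dots> = det D * det (H + Sm)" unfolding blk Sm_def by (rule block_det[OF Dc Qc Hc DiP(1) DiP(2)])
    finally show ?thesis .
  qed
  have mono: "det Sm \<le> det (H + Sm)" by (rule psd_det_mono[OF pH pSm])
  have detSm: "det Sm = (det Q)\<^sup>2 * det Di"
  proof -
    have QT: "Q\<^sup>T \<in> carrier_mat k k" using Qc by simp
    have "det Sm = det (Q\<^sup>T * Di) * det Q" unfolding Sm_def
      by (rule det_mult[OF _ Qc], insert QT DiP(1), auto)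
    also have "det (Q\<^sup>T * Di) = det (Q\<^sup>T) * det Di" by (rule det_mult[OF QT DiP(1)])
    also have "det (Q\<^sup>T) = det Q" by (rule det_transpose[OF Qc])
    finally show ?thesis by (simp add: power2_eq_square)
  qed
  have dA: "0 \<le> det A" by (rule psd_det_nonneg[OF pA])
  have "det A * (det Q)\<^sup>2 = det A * (det D * det Sm)" using detSm detDDi by (simp add: algebra_simps)
  also have "\<dots> \<le> det A * (det D * det (H + Sm))"
    using mono detD dA by (intro mult_left_mono, auto)
  also have "\<dots> = det B" using detB by simp
  finally show ?thesis unfolding A_def B_def Q_def U_def Yv_def Ai_def .
qed

end
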